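(* Let $X$ be a non-empty set and $A$ a non-empty subset of $X$, and let $P=\operatorname{Reg}(\mathcal T_X(A))$. Then $$\operatorname{rank}(P)=\begin{cases}1 & \text{if } |A|=1,\\ 2^{|X|} & \text{if } |A|\ge2 \text{ and } X \text{ is infinite},\\ 3 & \text{if } 3\le|A|=|X| \text{ is finite},\\ 1+|A|^{|X\setminus A|} & \text{otherwise}.\end{cases}$$
   Context: $\mathcal T_X(A)=\{f:X\to X\mid\operatorname{im}(f)\subseteq A\}$ under composition; $\operatorname{Reg}(T)$ is the set of regular elements of $T$, which here is a subsemigroup. $\operatorname{rank}(T)$ is the minimum cardinality of a generating set of the semigroup $T$. *)

theory Defs
  imports Main "HOL-Library.FuncSet" "HOL-Library.Equipollence"
begin

text \<open>Maps X -> X are represented extensionally: functions on the type 'a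
that are undefined outside X.\<close>

definition TXA :: "'a set \<Rightarrow> 'a set \<Rightarrow> ('a \<Rightarrow> 'a) set" where
  "TXA X A = {f \<in> X \<rightarrow>\<^sub>E X. f ` X \<subseteq> A}"

definition comp_on :: "'a set \<Rightarrow> ('a \<Rightarrow> 'a) \<Rightarrow> ('a \<Rightarrow> 'a) \<Rightarrow> ('a \<Rightarrow> 'a)" where
  "comp_on X f g = restrict (f \<circ> g) X"

definition Reg :: "'b set \<Rightarrow> ('b \<Rightarrow> 'b \<Rightarrow> 'b) \<Rightarrow> 'b set" where
  "Reg S m = {x \<in> S. \<exists>y \<in> S. m (m x y) x = x}"

inductive_set sg_gen :: "('b \<Rightarrow> 'b \<Rightarrow> 'b) \<Rightarrow> 'b set \<Rightarrow> 'b set"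
  for m :: "'b \<Rightarrow> 'b \<Rightarrow> 'b" and G :: "'b set" where
  base: "x \<in> G \<Longrightarrow> x \<in> sg_gen m G"
| mult: "x \<in> sg_gen m G \<Longrightarrow> y \<in> sg_gen m G \<Longrightarrow> m x y \<in> sg_gen m G"

definition generates :: "('b \<Rightarrow> 'b \<Rightarrow> 'b) \<Rightarrow> 'b set \<Rightarrow> 'b set \<Rightarrow> bool" where
  "generates m S G \<longleftrightarrow> G \<subseteq> S \<and> sg_gen m G = S"

text \<open>rank(S) equals the cardinality of K: some generating set has cardinality |K|,
  and every generating set has cardinality at least |K|.\<close>
definition has_rank :: "('b \<Rightarrow> 'b \<Rightarrow> 'b) \<Rightarrow> 'b set \<Rightarrow> 'c set \<Rightarrow> bool" where
  "has_rank m S K \<longleftrightarrow> (\<exists>G. generates m S G \<and> G \<approx> K) \<and> (\<forall>G. generates m S G \<longrightarrow> K \<lesssim> G)"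

end

theory Submission
  imports Defs "HOL-Combinatorics.Permutations"
begin


definition Pr :: "'a set \<Rightarrow> 'a set \<Rightarrow> ('a \<Rightarrow> 'a) set" where
  "Pr X A = Reg (TXA X A) (comp_on X)"

lemma comp_on_apply[simp]: "x \<in> X \<Longrightarrow> comp_on X f g x = f (g x)"
  by (simp add: comp_on_def)

lemma comp_on_out[simp]: "x \<notin> X \<Longrightarrow> comp_on X f g x = undefined"
  by (simp add: comp_on_def)

lemma Pr_iff:
  assumes "A \<subseteq> X" "A \<noteq> {}"
  shows "f \<in> Pr X A \<longleftrightarrow> f \<in> X \<rightarrow>\<^sub>E X \<and> f ` X \<subseteq> A \<and> f ` X \<subseteq> f ` A"
proof
  assume "f \<in> Pr X A"
  then obtain g where f: "f \<in> TXA X A" and g: "g \<in> TXA X A"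
    and e: "comp_on X (comp_on X f g) f = f"
    unfolding Pr_def Reg_def by auto
  have "f x \<in> f ` A" if "x \<in> X" for x
  proof -
    have fx: "f x \<in> X" using f that unfolding TXA_def by auto
    have "f x = comp_on X (comp_on X f g) f x" using e by simp
    also have "\<dots> = f (g (f x))" using that fx by simp
    finally show ?thesis using g fx unfolding TXA_def by auto
  qed
  then show "f \<in> X \<rightarrow>\<^sub>E X \<and> f ` X \<subseteq> A \<and> f ` X \<subseteq> f ` A" using f unfolding TXA_def by auto
next
  assume h: "f \<in> X \<rightarrow>\<^sub>E X \<and> f ` X \<subseteq> A \<and> f ` X \<subseteq> f ` A"
  obtain a0 where a0: "a0 \<in> A" using assms by auto
  define g where "g = restrict (\<lambda>y. if y \<in> f ` A then inv_into A f y else a0) X"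
  have gT: "g \<in> TXA X A" unfolding TXA_def g_def using a0 assms
    by (auto simp: inv_into_into)
  have fT: "f \<in> TXA X A" unfolding TXA_def using h by auto
  have "comp_on X (comp_on X f g) f = f"
  proof
    fix x show "comp_on X (comp_on X f g) f x = f x"
    proof (cases "x \<in> X")
      case True
      then have fx: "f x \<in> X" "f x \<in> f ` A" using h by auto
      then show ?thesis using True by (simp add: g_def f_inv_into_f)
    next
      case False
      then show ?thesis using h by (auto simp: PiE_def extensional_def)
    qed
  qed
  then show "f \<in> Pr X A" unfolding Pr_def Reg_def using gT fT by auto
qed

lemma Pr_comp:
  assumes AX: "A \<subseteq> X" "A \<noteq> {}" and fP: "f \<in> Pr X A" and gP: "g \<in> Pr X A"
  shows "comp_on X f g \<in> Pr X A"
proof -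
  note PI = Pr_iff[OF AX]
  have f: "f \<in> X \<rightarrow>\<^sub>E X" "f ` X \<subseteq> A" "f ` X \<subseteq> f ` A" using fP PI by blast+
  have g: "g \<in> X \<rightarrow>\<^sub>E X" "g ` X \<subseteq> A" "g ` X \<subseteq> g ` A" using gP PI by blast+
  have 1: "comp_on X f g \<in> X \<rightarrow>\<^sub>E X" using f g by (auto simp: comp_on_def)
  have 2: "comp_on X f g ` X \<subseteq> A" using f g by auto
  have 3: "comp_on X f g ` X \<subseteq> comp_on X f g ` A"
  proof
    fix y assume "y \<in> comp_on X f g ` X"
    then obtain x where x: "x \<in> X" "y = f (g x)" by auto
    then obtain a where a: "a \<in> A" "g x = g a" using g by blast
    have "a \<in> X" using a AX by blast
    then have "comp_on X f g a = y" using x a by simp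
    then show "y \<in> comp_on X f g ` A" using a(1) by blast
  qed
  show ?thesis using 1 2 3 PI by simp
qed

lemma sg_gen_sub:
  assumes "G \<subseteq> S" "\<And>x y. x \<in> S \<Longrightarrow> y \<in> S \<Longrightarrow> m x y \<in> S"
  shows "sg_gen m G \<subseteq> S"
proof
  fix x assume "x \<in> sg_gen m G"
  then show "x \<in> S" by induct (use assms in auto)
qed

lemma sg_gen_Pr:
  assumes "A \<subseteq> X" "A \<noteq> {}" "G \<subseteq> Pr X A"
  shows "sg_gen (comp_on X) G \<subseteq> Pr X A"
  using assms by (intro sg_gen_sub) (auto intro: Pr_comp)

lemma comp_on_assoc:
  assumes "h ` X \<subseteq> X"
  shows "comp_on X (comp_on X f g) h = comp_on X f (comp_on X g h)"
proof
  fix x show "comp_on X (comp_on X f g) h x = comp_on X f (comp_on X g h) x"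
    using assms by (cases "x \<in> X") auto
qed

lemma times_inf_eqpoll: "infinite H \<Longrightarrow> H \<times> H \<approx> H"
  using card_of_Times_same_infinite eqpoll_iff_card_of_ordIso by blast

lemma lepoll_Un_inf:
  assumes H: "infinite H" and B: "B \<lesssim> H" and C: "C \<lesssim> H"
  shows "B \<union> C \<lesssim> H"
proof -
  from lepoll_iff[THEN iffD1, OF B] obtain g where g: "B \<subseteq> g ` H" ..
  from lepoll_iff[THEN iffD1, OF C] obtain k where k: "C \<subseteq> k ` H" ..
  have "H \<noteq> {}" using H by auto
  then obtain a0 where a0: "a0 \<in> H" by blast
  have "infinite (H - {a0})" using H by simp
  then have "H - {a0} \<noteq> {}" by (metis finite.emptyI)
  then obtain a1 where a1: "a1 \<in> H" "a1 \<noteq> a0" by blast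
  define F where "F = (\<lambda>p. if fst p = a0 then g (snd p) else k (snd p))"
  have "B \<union> C \<subseteq> F ` (H \<times> H)"
  proof
    fix z assume "z \<in> B \<union> C"
    then show "z \<in> F ` (H \<times> H)"
    proof
      assume "z \<in> B" then obtain y where y: "y \<in> H" "z = g y" using g by blast
      have "F (a0, y) = z" using y by (simp add: F_def)
      moreover have "(a0, y) \<in> H \<times> H" using a0 y by blast
      ultimately show ?thesis by blast
    next
      assume "z \<in> C" then obtain y where y: "y \<in> H" "z = k y" using k by blast
      have "F (a1, y) = z" using y a1 by (simp add: F_def)
      moreover have "(a1, y) \<in> H \<times> H" using a1 y by blast
      ultimately show ?thesis by blast
    qed
  qed
  then have "B \<union> C \<lesssim> H \<times> H" by (rule subset_image_lepoll)
  also have "H \<times> H \<approx> H" using H by (rule times_inf_eqpoll)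
  finally show ?thesis .
qed

primrec lev :: "('b \<Rightarrow> 'b \<Rightarrow> 'b) \<Rightarrow> 'b set \<Rightarrow> nat \<Rightarrow> 'b set" where
  "lev m G 0 = G"
| "lev m G (Suc n) = lev m G n \<union> (\<lambda>(x,y). m x y) ` (lev m G n \<times> lev m G n)"

lemma lev_mono: "lev m G i \<subseteq> lev m G (i + k)"
  by (induct k) auto

lemma sg_gen_lev: "sg_gen m G \<subseteq> (\<Union>n. lev m G n)"
proof
  fix x assume "x \<in> sg_gen m G"
  then show "x \<in> (\<Union>n. lev m G n)"
  proof induct
    case (base x) then show ?case by (auto intro: exI[of _ 0])
  next
    case (mult x y)
    then obtain i j where "x \<in> lev m G i" "y \<in> lev m G j" by auto
    then have "x \<in> lev m G (max i j)" "y \<in> lev m G (max i j)"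
      using lev_mono[of m G i "max i j - i"] lev_mono[of m G j "max i j - j"] by auto
    then have "m x y \<in> lev m G (Suc (max i j))" by auto
    then show ?case by blast
  qed
qed

lemma lev_lepoll:
  assumes H: "infinite H" and G: "G \<lesssim> H"
  shows "lev m G n \<lesssim> H"
proof (induct n)
  case 0 then show ?case using G by simp
next
  case (Suc n)
  have "(\<lambda>(x,y). m x y) ` (lev m G n \<times> lev m G n) \<lesssim> lev m G n \<times> lev m G n"
    by (rule image_lepoll)
  also have "\<dots> \<lesssim> H \<times> H" using Suc by (intro times_lepoll_mono)
  also have "H \<times> H \<approx> H" using H by (rule times_inf_eqpoll)
  finally show ?case using Suc H by (simp add: lepoll_Un_inf)
qed

lemma sg_gen_lepoll:
  assumes H: "infinite H" and G: "G \<lesssim> H"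
  shows "sg_gen m G \<lesssim> H"
proof -
  have "\<forall>n. \<exists>g. lev m G n \<subseteq> g ` H" using lev_lepoll[OF H G] lepoll_iff[THEN iffD1] by blast
  then obtain g where g: "\<And>n. lev m G n \<subseteq> g n ` H" by metis
  have "sg_gen m G \<subseteq> (\<lambda>(n,x). g n x) ` (UNIV \<times> H)"
  proof
    fix z assume "z \<in> sg_gen m G"
    then obtain n where "z \<in> lev m G n" using sg_gen_lev[of m G] by blast
    then obtain x where "x \<in> H" "z = g n x" using g[of n] by blast
    then show "z \<in> (\<lambda>(n,x). g n x) ` (UNIV \<times> H)" by (auto intro!: image_eqI[of _ _ "(n,x)"])
  qed
  then have "sg_gen m G \<lesssim> (UNIV::nat set) \<times> H" by (rule subset_image_lepoll)
  also have "\<dots> \<lesssim> H \<times> H" using H infinite_le_lepoll by (intro times_lepoll_mono) auto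
  also have "H \<times> H \<approx> H" using H by (rule times_inf_eqpoll)
  finally show ?thesis .
qed



lemma Pow_eqpoll: "A \<approx> B \<Longrightarrow> Pow A \<approx> Pow B"
  unfolding eqpoll_def using bij_betw_Pow by blast

lemma PiE_lepoll_Pow: "X \<rightarrow>\<^sub>E X \<lesssim> Pow (X \<times> X)"
proof -
  define gr where "gr = (\<lambda>f::'a\<Rightarrow>'a. {(x, f x) | x. x \<in> X})"
  have "inj_on gr (X \<rightarrow>\<^sub>E X)"
  proof
    fix f g assume f: "f \<in> X \<rightarrow>\<^sub>E X" and g: "g \<in> X \<rightarrow>\<^sub>E X" and e: "gr f = gr g"
    show "f = g"
    proof
      fix x show "f x = g x"
      proof (cases "x \<in> X")
        case True
        then have "(x, f x) \<in> gr g" using e unfolding gr_def by blast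
        then show ?thesis unfolding gr_def by auto
      next
        case False then show ?thesis using f g by (simp add: PiE_def extensional_def)
      qed
    qed
  qed
  moreover have "gr \<in> (X \<rightarrow>\<^sub>E X) \<rightarrow> Pow (X \<times> X)" unfolding gr_def by auto
  ultimately show ?thesis unfolding lepoll_def' by blast
qed

lemma infinite_minus2_eqpoll:
  assumes "infinite X" "a \<in> X" "b \<in> X"
  shows "X - {a,b} \<approx> X"
proof -
  have i: "infinite (X - {a,b})" using assms by simp
  have "insert b (X - {a,b}) \<approx> X - {a,b}" using i by (rule infinite_insert_eqpoll)
  moreover have "insert a (insert b (X - {a,b})) \<approx> insert b (X - {a,b})"
    using i by (intro infinite_insert_eqpoll) simp
  moreover have "insert a (insert b (X - {a,b})) = X" using assms by auto
  ultimately show ?thesis by (metis eqpoll_sym eqpoll_trans)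
qed

lemma Pow_lepoll_Pr:
  assumes AX: "A \<subseteq> X" and ab: "a \<in> A" "b \<in> A" "a \<noteq> b"
  shows "Pow (X - {a,b}) \<lesssim> Pr X A"
proof -
  define F where "F = (\<lambda>S. restrict (\<lambda>x. if x = a then a else if x = b then b else if x \<in> S then a else b) X)"
  have "inj_on F (Pow (X - {a,b}))"
  proof
    fix S T assume S: "S \<in> Pow (X - {a,b})" and T: "T \<in> Pow (X - {a,b})" and e: "F S = F T"
    show "S = T"
    proof (rule set_eqI)
      fix x
      show "x \<in> S \<longleftrightarrow> x \<in> T"
      proof (cases "x \<in> X - {a,b}")
        case True
        then have "F S x = F T x" using e by simp
        then show ?thesis using True ab unfolding F_def by (auto split: if_splits)
      next
        case False then show ?thesis using S T by auto
      qed
    qed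
  qed
  moreover have "F \<in> Pow (X - {a,b}) \<rightarrow> Pr X A"
  proof
    fix S assume "S \<in> Pow (X - {a,b})"
    have 1: "F S \<in> X \<rightarrow>\<^sub>E X" using AX ab unfolding F_def by auto
    have 2: "F S ` X \<subseteq> A" using ab unfolding F_def by auto
    have aX: "a \<in> X" "b \<in> X" using AX ab by auto
    have 3: "F S ` X \<subseteq> F S ` A"
    proof
      fix y assume "y \<in> F S ` X"
      then have "y = a \<or> y = b" unfolding F_def by auto
      moreover have "F S a = a" "F S b = b" using aX ab unfolding F_def by auto
      ultimately show "y \<in> F S ` A" using ab by (metis image_eqI)
    qed
    have An: "A \<noteq> {}" using ab by auto
    show "F S \<in> Pr X A" using Pr_iff[OF AX An] 1 2 3 by simp
  qed
  ultimately show ?thesis unfolding lepoll_def' by blast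
qed

lemma Pr_sub_PiE: "A \<subseteq> X \<Longrightarrow> A \<noteq> {} \<Longrightarrow> Pr X A \<subseteq> X \<rightarrow>\<^sub>E X"
  using Pr_iff[of A X] by auto

lemma infinite_case:
  assumes AX: "A \<subseteq> X" and ab: "a \<in> A" "b \<in> A" "a \<noteq> b" and X: "infinite X"
  shows "has_rank (comp_on X) (Pr X A) (Pow X)"
proof -
  have An: "A \<noteq> {}" using ab by auto
  have aX: "a \<in> X" "b \<in> X" using AX ab by auto
  have "Pow X \<approx> Pow (X - {a,b})"
    by (rule Pow_eqpoll[OF eqpoll_sym[OF infinite_minus2_eqpoll[OF X aX]]])
  also have "Pow (X - {a,b}) \<lesssim> Pr X A" by (rule Pow_lepoll_Pr[OF AX ab])
  finally have low: "Pow X \<lesssim> Pr X A" .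
  have "Pr X A \<lesssim> X \<rightarrow>\<^sub>E X" using Pr_sub_PiE[OF AX An] by (rule subset_imp_lepoll)
  also have "\<dots> \<lesssim> Pow (X \<times> X)" by (rule PiE_lepoll_Pow)
  also have "Pow (X \<times> X) \<approx> Pow X" using times_inf_eqpoll[OF X] by (rule Pow_eqpoll)
  finally have up: "Pr X A \<lesssim> Pow X" .
  have eq: "Pr X A \<approx> Pow X" using lepoll_antisym[OF up low] .
  have gen: "generates (comp_on X) (Pr X A) (Pr X A)"
    unfolding generates_def
  proof
    show "sg_gen (comp_on X) (Pr X A) = Pr X A"
    proof
      show "sg_gen (comp_on X) (Pr X A) \<subseteq> Pr X A" using sg_gen_Pr[OF AX An] by blast
      show "Pr X A \<subseteq> sg_gen (comp_on X) (Pr X A)" by (auto intro: sg_gen.base)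
    qed
  qed simp
  have "Pow X \<lesssim> G" if G: "generates (comp_on X) (Pr X A) G" for G
  proof (cases "finite G")
    case False
    have "Pow X \<lesssim> Pr X A" by (rule low)
    also have "Pr X A = sg_gen (comp_on X) G" using G unfolding generates_def by simp
    also have "sg_gen (comp_on X) G \<lesssim> G" using False by (intro sg_gen_lepoll) simp_all
    finally show ?thesis .
  next
    case True
    have "Pow X \<lesssim> Pr X A" by (rule low)
    also have "Pr X A = sg_gen (comp_on X) G" using G unfolding generates_def by simp
    also have "sg_gen (comp_on X) G \<lesssim> (UNIV::nat set)"
      using True by (intro sg_gen_lepoll finite_lepoll_infinite) simp_all
    also have "(UNIV::nat set) \<lesssim> X" by (rule infinite_le_lepoll[THEN iffD1, OF X])
    finally have "Pow X \<lesssim> X" .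
    then have "Pow X \<approx> X" by (rule lepoll_antisym[OF _ lepoll_Pow_self])
    then have "X \<approx> Pow X" by (rule eqpoll_sym)
    then show ?thesis using lesspoll_Pow_self[of X] unfolding lesspoll_def by (simp only: not_True_eq_False)
  qed
  then show ?thesis unfolding has_rank_def using gen eq by blast
qed



definition WW :: "'a set \<Rightarrow> 'a set \<Rightarrow> ('a \<Rightarrow> 'a) set" where
  "WW X A = (X - A) \<rightarrow>\<^sub>E A"

definition mkJ :: "'a set \<Rightarrow> 'a set \<Rightarrow> ('a \<Rightarrow> 'a) \<Rightarrow> ('a \<Rightarrow> 'a) \<Rightarrow> ('a \<Rightarrow> 'a)" where
  "mkJ X A p w = restrict (\<lambda>x. if x \<in> A then p x else p (w x)) X"

definition Jset :: "'a set \<Rightarrow> 'a set \<Rightarrow> ('a \<Rightarrow> 'a) set" where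
  "Jset X A = {f \<in> Pr X A. f ` A = A}"

lemma mkJ_A: "x \<in> A \<Longrightarrow> A \<subseteq> X \<Longrightarrow> mkJ X A p w x = p x"
  unfolding mkJ_def by auto

lemma mkJ_XA: "x \<in> X \<Longrightarrow> x \<notin> A \<Longrightarrow> mkJ X A p w x = p (w x)"
  unfolding mkJ_def by auto

lemma mkJ_out: "x \<notin> X \<Longrightarrow> mkJ X A p w x = undefined"
  unfolding mkJ_def by auto

lemma WW_in: "w \<in> WW X A \<Longrightarrow> x \<in> X \<Longrightarrow> x \<notin> A \<Longrightarrow> w x \<in> A"
  unfolding WW_def by auto

lemma mkJ_J:
  assumes AX: "A \<subseteq> X" "A \<noteq> {}" and p: "p permutes A" and w: "w \<in> WW X A"
  shows "mkJ X A p w \<in> Jset X A"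
proof -
  have pA: "p x \<in> A" if "x \<in> A" for x using p that by (simp add: permutes_in_image)
  have img: "mkJ X A p w ` A = A"
  proof -
    have "mkJ X A p w ` A = p ` A" using AX by (auto simp: mkJ_A intro!: image_cong)
    also have "\<dots> = A" using p by (rule permutes_image)
    finally show ?thesis .
  qed
  have vals: "mkJ X A p w x \<in> A" if "x \<in> X" for x
  proof (cases "x \<in> A")
    case True then show ?thesis using AX pA by (simp add: mkJ_A)
  next
    case False then show ?thesis using that pA WW_in[OF w] by (simp add: mkJ_XA)
  qed
  have 1: "mkJ X A p w \<in> X \<rightarrow>\<^sub>E X"
  proof (rule PiE_I)
    fix x assume "x \<in> X" then show "mkJ X A p w x \<in> X" using vals AX by blast
  next
    fix x assume "x \<notin> X" then show "mkJ X A p w x = undefined" by (rule mkJ_out)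
  qed
  have 2: "mkJ X A p w ` X \<subseteq> A" using vals by auto
  have 3: "mkJ X A p w ` X \<subseteq> mkJ X A p w ` A" using 2 img by simp
  have "mkJ X A p w \<in> Pr X A" using Pr_iff[OF AX] 1 2 3 by simp
  then show ?thesis unfolding Jset_def using img by simp
qed

lemma mkJ_comp:
  assumes AX: "A \<subseteq> X" and t: "t permutes A" and v: "v \<in> WW X A"
  shows "comp_on X (mkJ X A p w) (mkJ X A t v) = mkJ X A (p \<circ> t) v"
proof
  fix x
  have tA: "t y \<in> A" if "y \<in> A" for y using t that by (simp add: permutes_in_image)
  show "comp_on X (mkJ X A p w) (mkJ X A t v) x = mkJ X A (p \<circ> t) v x"
  proof (cases "x \<in> X")
    case True
    show ?thesis
    proof (cases "x \<in> A")
      case True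
      have "x \<in> X" "t x \<in> X" using AX True tA[OF True] by auto
      then show ?thesis using AX True tA[OF True] by (simp add: mkJ_A)
    next
      case False
      have "v x \<in> A" using WW_in[OF v \<open>x \<in> X\<close> False] .
      then have "t (v x) \<in> A" by (rule tA)
      then show ?thesis using AX False \<open>x \<in> X\<close> by (simp add: mkJ_A mkJ_XA)
    qed
  next
    case False then show ?thesis by (simp add: mkJ_out)
  qed
qed

lemma Pr_vals:
  assumes AX: "A \<subseteq> X" "A \<noteq> {}" and f: "f \<in> Pr X A"
  shows "f \<in> X \<rightarrow>\<^sub>E X" "f ` X \<subseteq> A" "f ` X \<subseteq> f ` A"
  using f Pr_iff[OF AX] by simp_all

lemma J_repr:
  assumes AX: "A \<subseteq> X" "A \<noteq> {}" and fin: "finite A" and f: "f \<in> Jset X A"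
  shows "\<exists>p w. p permutes A \<and> w \<in> WW X A \<and> f = mkJ X A p w"
proof -
  have fP: "f \<in> Pr X A" and fA: "f ` A = A" using f unfolding Jset_def by auto
  note fv = Pr_vals[OF AX fP]
  have inj: "inj_on f A" using fin fA by (intro eq_card_imp_inj_on) simp_all
  define p where "p = (\<lambda>x. if x \<in> A then f x else x)"
  have "inj_on p A" using inj unfolding p_def inj_on_def by auto
  moreover have "p ` A = A" using fA unfolding p_def by auto
  ultimately have "bij_betw p A A" unfolding bij_betw_def by simp
  then have pp: "p permutes A" by (rule bij_imp_permutes) (simp add: p_def)
  define w where "w = restrict (\<lambda>x. inv_into A f (f x)) (X - A)"
  have w: "w \<in> WW X A"
  proof -
    have "inv_into A f (f x) \<in> A" if "x \<in> X - A" for x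
      using fv(3) that by (intro inv_into_into) auto
    then show ?thesis unfolding WW_def w_def by auto
  qed
  have "f = mkJ X A p w"
  proof
    fix x show "f x = mkJ X A p w x"
    proof (cases "x \<in> X")
      case True
      show ?thesis
      proof (cases "x \<in> A")
        case True then show ?thesis using AX by (simp add: mkJ_A p_def)
      next
        case False
        have fx: "f x \<in> f ` A" using fv(3) \<open>x \<in> X\<close> by auto
        have wx: "w x = inv_into A f (f x)" using \<open>x \<in> X\<close> False by (simp add: w_def)
        have "w x \<in> A" using wx fx by (simp add: inv_into_into)
        then show ?thesis using False \<open>x \<in> X\<close> wx fx by (simp add: mkJ_XA p_def f_inv_into_f)
      qed
    next
      case False then show ?thesis using fv(1) by (simp add: mkJ_out PiE_def extensional_def)
    qed
  qed
  then show ?thesis using pp w by blast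
qed

lemma mkJ_inj:
  assumes AX: "A \<subseteq> X" and p: "p permutes A" and q: "q permutes A"
    and w: "w \<in> WW X A" and v: "v \<in> WW X A" and e: "mkJ X A p w = mkJ X A q v"
  shows "p = q \<and> w = v"
proof -
  have pq: "p = q"
  proof
    fix x show "p x = q x"
    proof (cases "x \<in> A")
      case True
      then have "mkJ X A p w x = mkJ X A q v x" using e by simp
      then show ?thesis using True AX by (simp add: mkJ_A)
    next
      case False then show ?thesis using p q by (simp add: permutes_not_in)
    qed
  qed
  have "w = v"
  proof
    fix x show "w x = v x"
    proof (cases "x \<in> X - A")
      case True
      then have "mkJ X A p w x = mkJ X A q v x" using e by simp
      then have "p (w x) = p (v x)" using True pq by (simp add: mkJ_XA)
      then show ?thesis using p by (metis permutes_inverses(2))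
    next
      case False then show ?thesis using w v unfolding WW_def by (simp add: PiE_def extensional_def)
    qed
  qed
  then show ?thesis using pq by simp
qed

lemma J_factor:
  assumes AX: "A \<subseteq> X" "A \<noteq> {}" and fin: "finite A" and f: "f \<in> Pr X A" and g: "g \<in> Pr X A"
    and c: "comp_on X f g \<in> Jset X A"
  shows "f \<in> Jset X A \<and> g \<in> Jset X A"
proof -
  note fv = Pr_vals[OF AX f] and gv = Pr_vals[OF AX g]
  have "comp_on X f g ` A = f ` (g ` A)" using AX by (auto simp: image_image intro!: image_cong)
  then have e: "f ` (g ` A) = A" using c unfolding Jset_def by simp
  have gA: "g ` A \<subseteq> A" using gv(2) AX by auto
  have "card A \<le> card (g ` A)" using e card_image_le[of "g ` A" f] fin gA finite_subset by metis
  then have "g ` A = A" using gA fin by (metis card_seteq)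
  then show ?thesis using e f g unfolding Jset_def by simp
qed

lemma J_closed:
  assumes AX: "A \<subseteq> X" "A \<noteq> {}" and f: "f \<in> Jset X A" and g: "g \<in> Jset X A"
  shows "comp_on X f g \<in> Jset X A"
proof -
  have fP: "f \<in> Pr X A" "f ` A = A" and gP: "g \<in> Pr X A" "g ` A = A" using f g unfolding Jset_def by auto
  have "comp_on X f g ` A = f ` (g ` A)" using AX by (auto simp: image_image intro!: image_cong)
  then have "comp_on X f g ` A = A" using fP gP by simp
  then show ?thesis using Pr_comp[OF AX fP(1) gP(1)] unfolding Jset_def by simp
qed

lemma sg_gen_J:
  assumes AX: "A \<subseteq> X" "A \<noteq> {}" and fin: "finite A" and G: "G \<subseteq> Pr X A"
  shows "sg_gen (comp_on X) G \<inter> Jset X A \<subseteq> sg_gen (comp_on X) (G \<inter> Jset X A)"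
proof -
  have "x \<in> Pr X A \<and> (x \<in> Jset X A \<longrightarrow> x \<in> sg_gen (comp_on X) (G \<inter> Jset X A))"
    if "x \<in> sg_gen (comp_on X) G" for x
    using that
  proof induct
    case (base x) then show ?case using G by (auto intro: sg_gen.base)
  next
    case (mult x y)
    have c: "comp_on X x y \<in> Pr X A" using mult Pr_comp[OF AX] by blast
    show ?case
    proof (intro conjI c impI)
      assume "comp_on X x y \<in> Jset X A"
      then have "x \<in> Jset X A \<and> y \<in> Jset X A" using J_factor[OF AX fin] mult by blast
      then show "comp_on X x y \<in> sg_gen (comp_on X) (G \<inter> Jset X A)"
        using mult by (auto intro: sg_gen.mult)
    qed
  qed
  then show ?thesis by blast
qed



lemma Pr_finite: "A \<subseteq> X \<Longrightarrow> A \<noteq> {} \<Longrightarrow> finite X \<Longrightarrow> finite (Pr X A)"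
  using Pr_sub_PiE by (metis finite_PiE finite_subset)

lemma card_WW: "finite X \<Longrightarrow> card (WW X A) = card A ^ card (X - A)"
  unfolding WW_def by (simp add: card_PiE)

lemma finite_WW: "finite X \<Longrightarrow> A \<subseteq> X \<Longrightarrow> finite (WW X A)"
  unfolding WW_def by (intro finite_PiE) (auto intro: finite_subset)

lemma sg_gen_mono_gen: "sg_gen m G \<subseteq> sg_gen m H" if "G \<subseteq> H"
proof
  fix x assume "x \<in> sg_gen m G" then show "x \<in> sg_gen m H"
    by induct (use that in \<open>auto intro: sg_gen.intros\<close>)
qed

lemma lower_count:
  assumes AX: "A \<subseteq> X" "A \<noteq> {}" and finX: "finite X"
    and GP: "G \<subseteq> Pr X A" and Gs: "sg_gen (comp_on X) G = Pr X A"
  shows "card (WW X A) \<le> card (G \<inter> Jset X A)"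
proof -
  have fin: "finite A" using AX finX finite_subset by blast
  define WG where "WG = {w \<in> WW X A. \<exists>p. p permutes A \<and> mkJ X A p w \<in> G \<inter> Jset X A}"
  have inv: "\<exists>p w. p permutes A \<and> w \<in> WG \<and> f = mkJ X A p w"
    if "f \<in> sg_gen (comp_on X) (G \<inter> Jset X A)" for f
    using that
  proof induct
    case (base f)
    then obtain p w where "p permutes A" "w \<in> WW X A" "f = mkJ X A p w"
      using J_repr[OF AX fin] by blast
    then show ?case using base unfolding WG_def by blast
  next
    case (mult f g)
    then obtain p w q v where pw: "p permutes A" "f = mkJ X A p w"
      and qv: "q permutes A" "v \<in> WG" "g = mkJ X A q v" by blast
    have "v \<in> WW X A" using qv unfolding WG_def by blast
    then have "comp_on X f g = mkJ X A (p \<circ> q) v" using pw qv mkJ_comp[OF AX(1)] by simp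
    moreover have "p \<circ> q permutes A" using pw qv by (simp add: permutes_compose)
    ultimately show ?case using qv by blast
  qed
  have WsubWG: "WW X A \<subseteq> WG"
  proof
    fix w assume w: "w \<in> WW X A"
    have "mkJ X A id w \<in> Jset X A" using mkJ_J[OF AX permutes_id w] .
    moreover then have "mkJ X A id w \<in> sg_gen (comp_on X) G" using Gs unfolding Jset_def by simp
    ultimately have "mkJ X A id w \<in> sg_gen (comp_on X) (G \<inter> Jset X A)"
      using sg_gen_J[OF AX fin GP] by blast
    then obtain p v where "p permutes A" "v \<in> WG" "mkJ X A id w = mkJ X A p v" using inv by blast
    moreover then have "v \<in> WW X A" unfolding WG_def by blast
    ultimately have "w = v" using mkJ_inj[OF AX(1) permutes_id _ w] by blast
    then show "w \<in> WG" using \<open>v \<in> WG\<close> by simp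
  qed
  define psi where "psi = (\<lambda>f. SOME w. \<exists>p. p permutes A \<and> w \<in> WW X A \<and> f = mkJ X A p w)"
  have "WG \<subseteq> psi ` (G \<inter> Jset X A)"
  proof
    fix w assume "w \<in> WG"
    then obtain p where p: "p permutes A" "w \<in> WW X A" "mkJ X A p w \<in> G \<inter> Jset X A"
      unfolding WG_def by blast
    let ?f = "mkJ X A p w"
    have "\<exists>w. \<exists>p. p permutes A \<and> w \<in> WW X A \<and> ?f = mkJ X A p w" using p by blast
    then have "\<exists>p'. p' permutes A \<and> psi ?f \<in> WW X A \<and> ?f = mkJ X A p' (psi ?f)"
      unfolding psi_def by (rule someI_ex)
    then obtain p' where "p' permutes A" "psi ?f \<in> WW X A" "?f = mkJ X A p' (psi ?f)" by blast
    then have "psi ?f = w" using mkJ_inj[OF AX(1) p(1) _ p(2)] by metis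
    then show "w \<in> psi ` (G \<inter> Jset X A)" using p(3) by (metis image_eqI)
  qed
  have finG: "finite G" using GP Pr_finite[OF AX finX] finite_subset by blast
  have "card (WW X A) \<le> card WG" using WsubWG
    by (intro card_mono) (auto simp: WG_def finite_WW[OF finX AX(1)])
  also have "\<dots> \<le> card (psi ` (G \<inter> Jset X A))"
    using \<open>WG \<subseteq> _\<close> finG by (intro card_mono) auto
  also have "\<dots> \<le> card (G \<inter> Jset X A)" by (rule card_image_le) (use finG in auto)
  finally show ?thesis .
qed

lemma const_Pr:
  assumes AX: "A \<subseteq> X" and a: "a \<in> A"
  shows "restrict (\<lambda>_. a) X \<in> Pr X A"
proof -
  have An: "A \<noteq> {}" using a by auto
  have X: "X \<noteq> {}" using AX a by auto
  have "restrict (\<lambda>_. a) X ` X \<subseteq> restrict (\<lambda>_. a) X ` A" using a AX by auto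
  moreover have "restrict (\<lambda>_. a) X \<in> X \<rightarrow>\<^sub>E X" using AX a by auto
  moreover have "restrict (\<lambda>_. a) X ` X \<subseteq> A" using a by auto
  ultimately show ?thesis using Pr_iff[OF AX An] by simp
qed

lemma not_all_J:
  assumes AX: "A \<subseteq> X" and ab: "a \<in> A" "b \<in> A" "a \<noteq> b"
    and GP: "G \<subseteq> Pr X A" and Gs: "sg_gen (comp_on X) G = Pr X A"
  shows "G - Jset X A \<noteq> {}"
proof
  assume "G - Jset X A = {}"
  then have "G \<subseteq> Jset X A" by blast
  moreover have An: "A \<noteq> {}" using ab by auto
  ultimately have "sg_gen (comp_on X) G \<subseteq> Jset X A"
    using J_closed[OF AX An] by (intro sg_gen_sub) auto
  then have c: "restrict (\<lambda>_. a) X \<in> Jset X A" using const_Pr[OF AX ab(1)] Gs by blast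
  have "restrict (\<lambda>_. a) X ` A = {a}" using AX ab by auto
  then have "A = {a}" using c unfolding Jset_def by simp
  then show False using ab by auto
qed

primrec pw :: "'a set \<Rightarrow> ('a \<Rightarrow> 'a) \<Rightarrow> nat \<Rightarrow> ('a \<Rightarrow> 'a)" where
  "pw X g 0 = g"
| "pw X g (Suc k) = comp_on X g (pw X g k)"

lemma pw_Pr: "A \<subseteq> X \<Longrightarrow> A \<noteq> {} \<Longrightarrow> g \<in> Pr X A \<Longrightarrow> pw X g k \<in> Pr X A"
  by (induct k) (auto intro: Pr_comp)

lemma pw_add:
  assumes AX: "A \<subseteq> X" "A \<noteq> {}" and g: "g \<in> Pr X A"
  shows "comp_on X (pw X g i) (pw X g j) = pw X g (Suc (i + j))"
proof (induct i)
  case 0 then show ?case by simp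
next
  case (Suc i)
  have "pw X g j ` X \<subseteq> X" using Pr_vals(1)[OF AX pw_Pr[OF AX g]] by auto
  then have "comp_on X (pw X g (Suc i)) (pw X g j) = comp_on X g (comp_on X (pw X g i) (pw X g j))"
    by (simp add: comp_on_assoc)
  then show ?case using Suc by simp
qed

lemma sg_gen_single:
  assumes AX: "A \<subseteq> X" "A \<noteq> {}" and g: "g \<in> Pr X A"
  shows "sg_gen (comp_on X) {g} \<subseteq> range (pw X g)"
proof
  fix x assume "x \<in> sg_gen (comp_on X) {g}"
  then show "x \<in> range (pw X g)"
  proof induct
    case (base x) then show ?case by (auto intro: range_eqI[of _ _ 0])
  next
    case (mult x y)
    then obtain i j where "x = pw X g i" "y = pw X g j" by blast
    then have "comp_on X x y = pw X g (Suc (i + j))" using pw_add[OF AX g] by simp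
    then show ?case by (metis rangeI)
  qed
qed

lemma two_perm_gens:
  assumes AX: "A \<subseteq> X" and finX: "finite X" and c3: "3 \<le> card A"
    and GP: "G \<subseteq> Pr X A" and Gs: "sg_gen (comp_on X) G = Pr X A"
  shows "2 \<le> card (G \<inter> Jset X A)"
proof (rule ccontr)
  assume "\<not> 2 \<le> card (G \<inter> Jset X A)"
  then have le1: "card (G \<inter> Jset X A) \<le> 1" by simp
  have fin: "finite A" using AX finX finite_subset by blast
  have An: "A \<noteq> {}" using c3 by auto
  obtain a b c where abc: "a \<in> A" "b \<in> A" "c \<in> A" "a \<noteq> b" "b \<noteq> c" "a \<noteq> c"
  proof -
    obtain a where a: "a \<in> A" using An by blast
    have "card (A - {a}) \<ge> 2" using c3 a fin by simp
    then have "A - {a} \<noteq> {}" by (metis card.empty not_numeral_le_zero)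
    then obtain b where b: "b \<in> A - {a}" by blast
    have "card (A - {a} - {b}) \<ge> 1" using c3 a b fin by simp
    then have "A - {a} - {b} \<noteq> {}" by (metis card.empty not_one_le_zero)
    then obtain c where "c \<in> A - {a} - {b}" by blast
    then show ?thesis using that a b by blast
  qed
  obtain w0 where w0: "w0 \<in> WW X A"
  proof -
    obtain a0 where "a0 \<in> A" using An by blast
    then have "restrict (\<lambda>_. a0) (X - A) \<in> WW X A" unfolding WW_def by auto
    then show ?thesis using that by blast
  qed
  define x where "x = mkJ X A (Transposition.transpose a b) w0"
  define y where "y = mkJ X A (Transposition.transpose b c) w0"
  have pab: "Transposition.transpose a b permutes A" using abc by (simp add: permutes_swap_id)
  have pbc: "Transposition.transpose b c permutes A" using abc by (simp add: permutes_swap_id)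
  have xJ: "x \<in> Jset X A" unfolding x_def using mkJ_J[OF AX An pab w0] .
  have yJ: "y \<in> Jset X A" unfolding y_def using mkJ_J[OF AX An pbc w0] .
  have JS: "Jset X A \<subseteq> sg_gen (comp_on X) (G \<inter> Jset X A)"
    using sg_gen_J[OF AX An fin GP] Gs unfolding Jset_def by auto
  have finG: "finite (G \<inter> Jset X A)" using GP Pr_finite[OF AX An finX] finite_subset by blast
  show False
  proof (cases "G \<inter> Jset X A = {}")
    case True
    have "sg_gen (comp_on X) {} \<subseteq> {}" by (rule sg_gen_sub) auto
    then show False using JS xJ True by auto
  next
    case False
    have "card (G \<inter> Jset X A) \<noteq> 0" using False finG by simp
    then have "card (G \<inter> Jset X A) = 1" using le1 by linarith
    then obtain g where g: "G \<inter> Jset X A = {g}" by (rule card_1_singletonE)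
    then have gP: "g \<in> Pr X A" using GP by blast
    have "x \<in> range (pw X g)" "y \<in> range (pw X g)"
      using JS xJ yJ sg_gen_single[OF AX An gP] g by auto
    then obtain i j where ij: "x = pw X g i" "y = pw X g j" by blast
    have "comp_on X x y = comp_on X y x"
      using pw_add[OF AX An gP, of i j] pw_add[OF AX An gP, of j i] ij by (simp add: add.commute)
    then have "mkJ X A (Transposition.transpose a b \<circ> Transposition.transpose b c) w0
             = mkJ X A (Transposition.transpose b c \<circ> Transposition.transpose a b) w0"
      unfolding x_def y_def using mkJ_comp[OF AX(1) pbc w0] mkJ_comp[OF AX(1) pab w0] by simp
    then have "Transposition.transpose a b \<circ> Transposition.transpose b c
             = Transposition.transpose b c \<circ> Transposition.transpose a b"
      using mkJ_inj[OF AX(1) permutes_compose[OF pbc pab] permutes_compose[OF pab pbc] w0 w0] by blast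
    then have "Transposition.transpose a b (Transposition.transpose b c c)
             = Transposition.transpose b c (Transposition.transpose a b c)" by (metis comp_apply)
    then show False using abc by (simp add: transpose_def)
  qed
qed



definition cyc :: "'a set \<Rightarrow> (nat \<Rightarrow> 'a) \<Rightarrow> nat \<Rightarrow> 'a \<Rightarrow> 'a" where
  "cyc A h n y = (if y \<in> A then h (Suc (inv_into {..<n} h y) mod n) else y)"

lemma conj_transpose:
  assumes "inj f"
  shows "Transposition.transpose (f a) (f b) (f z) = f (Transposition.transpose a b z)"
  using assms by (simp add: transpose_def inj_eq)

lemma conj_transpose_fun:
  assumes "inj f" and "\<And>y. f (g y) = y"
  shows "f \<circ> Transposition.transpose a b \<circ> g = Transposition.transpose (f a) (f b)"
proof
  fix y
  have "(f \<circ> Transposition.transpose a b \<circ> g) y = f (Transposition.transpose a b (g y))" by simp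
  also have "\<dots> = Transposition.transpose (f a) (f b) (f (g y))" using conj_transpose[OF assms(1)] by simp
  also have "\<dots> = Transposition.transpose (f a) (f b) y" using assms(2) by simp
  finally show "(f \<circ> Transposition.transpose a b \<circ> g) y = Transposition.transpose (f a) (f b) y" .
qed

locale enum =
  fixes A :: "'a set" and h :: "nat \<Rightarrow> 'a" and n :: nat
  assumes bij: "bij_betw h {..<n} A" and n2: "2 \<le> n"
begin

lemma hA: "i < n \<Longrightarrow> h i \<in> A"
  using bij by (auto simp: bij_betw_def)

lemma h_inj: "i < n \<Longrightarrow> j < n \<Longrightarrow> h i = h j \<longleftrightarrow> i = j"
  using bij by (auto simp: bij_betw_def inj_on_def)

lemma A_h: "y \<in> A \<Longrightarrow> \<exists>i<n. y = h i"
  using bij by (auto simp: bij_betw_def)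

lemma cyc_h: "i < n \<Longrightarrow> cyc A h n (h i) = h (Suc i mod n)"
  using hA bij by (simp add: cyc_def bij_betw_inv_into_left)

lemma cyc_out: "y \<notin> A \<Longrightarrow> cyc A h n y = y"
  by (simp add: cyc_def)

lemma cycpow_h: "i < n \<Longrightarrow> (cyc A h n ^^ k) (h i) = h ((i + k) mod n)"
proof (induct k)
  case 0 then show ?case by simp
next
  case (Suc k)
  have "(cyc A h n ^^ Suc k) (h i) = cyc A h n (h ((i + k) mod n))" using Suc by simp
  also have "\<dots> = h (Suc ((i + k) mod n) mod n)" using n2 by (intro cyc_h) simp
  also have "Suc ((i + k) mod n) mod n = (i + Suc k) mod n" by (simp add: mod_Suc_eq)
  finally show ?case .
qed

lemma cycpow_out: "y \<notin> A \<Longrightarrow> (cyc A h n ^^ k) y = y"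
  by (induct k) (simp_all add: cyc_out)

lemma cycpow_n: "cyc A h n ^^ n = id"
proof
  fix y show "(cyc A h n ^^ n) y = id y"
  proof (cases "y \<in> A")
    case True
    then obtain i where "i < n" "y = h i" using A_h by blast
    then show ?thesis by (simp add: cycpow_h)
  next
    case False then show ?thesis by (simp add: cycpow_out)
  qed
qed

lemma cycpow_inv: "k \<le> n \<Longrightarrow> (cyc A h n ^^ k) ((cyc A h n ^^ (n - k)) y) = y"
  using cycpow_n funpow_add[of k "n - k" "cyc A h n"] by (metis comp_apply id_apply le_add_diff_inverse)

lemma cycpow_inj: "k \<le> n \<Longrightarrow> inj (cyc A h n ^^ k)"
proof (rule injI)
  fix x y assume k: "k \<le> n" and e: "(cyc A h n ^^ k) x = (cyc A h n ^^ k) y"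
  have "n - k + k = n" using k by simp
  then have "\<And>z. (cyc A h n ^^ (n - k)) ((cyc A h n ^^ k) z) = z"
    using cycpow_n funpow_add[of "n - k" k "cyc A h n"] by (metis comp_apply id_apply)
  then show "x = y" using e by metis
qed

lemma cyc_permutes: "cyc A h n permutes A"
proof (rule bij_imp_permutes)
  have "inj (cyc A h n)" using cycpow_inj[of 1] n2 by simp
  moreover have "cyc A h n ` A \<subseteq> A"
  proof
    fix y assume "y \<in> cyc A h n ` A"
    then obtain z where "z \<in> A" "y = cyc A h n z" by blast
    then obtain i where "i < n" "y = h (Suc i mod n)" using A_h cyc_h by blast
    then show "y \<in> A" using hA n2 by simp
  qed
  moreover have "A \<subseteq> cyc A h n ` A"
  proof
    fix y assume "y \<in> A"
    then obtain i where i: "i < n" "y = h i" using A_h by blast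
    have "cyc A h n ((cyc A h n ^^ (n - 1)) y) = y" using cycpow_inv[of 1] n2 by simp
    moreover have "(cyc A h n ^^ (n - 1)) y \<in> A" using i n2 by (simp add: cycpow_h hA)
    ultimately show "y \<in> cyc A h n ` A" by (metis image_eqI)
  qed
  ultimately show "bij_betw (cyc A h n) A A" unfolding bij_betw_def by (auto simp: inj_on_def inj_def)
next
  fix x assume "x \<notin> A" then show "cyc A h n x = x" by (rule cyc_out)
qed

abbreviation "tr \<equiv> Transposition.transpose (h 0) (h 1)"

lemma adj_transpose:
  assumes k: "Suc k < n"
  shows "(cyc A h n ^^ k) \<circ> tr \<circ> (cyc A h n ^^ (n - k)) = Transposition.transpose (h k) (h (Suc k))"
proof -
  have "(cyc A h n ^^ k) \<circ> tr \<circ> (cyc A h n ^^ (n - k))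
      = Transposition.transpose ((cyc A h n ^^ k) (h 0)) ((cyc A h n ^^ k) (h 1))"
    using k by (intro conj_transpose_fun cycpow_inj cycpow_inv) simp_all
  also have "\<dots> = Transposition.transpose (h k) (h (Suc k))"
    using k n2 by (simp add: cycpow_h)
  finally show ?thesis .
qed

lemma perm_gen:
  assumes Qc: "\<And>f g. f \<in> Q \<Longrightarrow> g \<in> Q \<Longrightarrow> f \<circ> g \<in> Q"
    and tQ: "tr \<in> Q" and cQ: "cyc A h n \<in> Q"
    and p: "p permutes A"
  shows "p \<in> Q"
proof -
  have pows: "cyc A h n ^^ Suc k \<in> Q" for k
  proof (induct k)
    case 0 then show ?case using cQ by simp
  next
    case (Suc k) then show ?case using Qc[OF cQ] by (simp only: funpow.simps(2))
  qed
  have "Suc (n - 1) = n" using n2 by simp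
  then have idQ: "id \<in> Q" using pows[of "n - 1"] cycpow_n by simp
  have powQ: "cyc A h n ^^ k \<in> Q" for k
    using pows[of "k - 1"] idQ by (cases k) simp_all
  have adjQ: "Transposition.transpose (h k) (h (Suc k)) \<in> Q" if "Suc k < n" for k
    using adj_transpose[OF that] Qc[OF Qc[OF powQ tQ] powQ] by metis
  have stepQ: "Transposition.transpose (h i) (h (i + Suc d)) \<in> Q" if "i + Suc d < n" for i d
    using that
  proof (induct d)
    case 0 then show ?case using adjQ by simp
  next
    case (Suc d)
    let ?s = "Transposition.transpose (h (i + Suc d)) (h (i + Suc (Suc d)))"
    have sQ: "?s \<in> Q" using adjQ[of "i + Suc d"] Suc by simp
    have IH: "Transposition.transpose (h i) (h (i + Suc d)) \<in> Q" using Suc by simp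
    have "?s \<circ> Transposition.transpose (h i) (h (i + Suc d)) \<circ> ?s
        = Transposition.transpose (?s (h i)) (?s (h (i + Suc d)))"
      by (intro conj_transpose_fun) simp_all
    also have "?s (h i) = h i" using Suc.prems by (simp add: transpose_def h_inj)
    also have "?s (h (i + Suc d)) = h (i + Suc (Suc d))" by simp
    finally have eq: "?s \<circ> Transposition.transpose (h i) (h (i + Suc d)) \<circ> ?s
        = Transposition.transpose (h i) (h (i + Suc (Suc d)))" .
    have "?s \<circ> Transposition.transpose (h i) (h (i + Suc d)) \<circ> ?s \<in> Q" by (rule Qc[OF Qc[OF sQ IH] sQ])
    then show ?case by (simp only: eq)
  qed
  have trQ: "Transposition.transpose a b \<in> Q" if ab: "a \<in> A" "b \<in> A" "a \<noteq> b" for a b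
  proof -
    obtain i where i: "i < n" "a = h i" using A_h ab(1) by blast
    obtain j where j: "j < n" "b = h j" using A_h ab(2) by blast
    have ij: "i < n" "j < n" "a = h i" "b = h j" using i j by auto
    have "i \<noteq> j" using ij ab by blast
    then show ?thesis
    proof (cases "i < j")
      case True
      then have "j = i + Suc (j - i - 1)" by simp
      then show ?thesis using stepQ[of i "j - i - 1"] ij by metis
    next
      case False
      then have "i = j + Suc (i - j - 1)" using \<open>i \<noteq> j\<close> by simp
      then show ?thesis using stepQ[of j "i - j - 1"] ij by (metis transpose_commute)
    qed
  qed
  have finA: "finite A" using bij bij_betw_finite by blast
  show ?thesis using p finA
  proof (induct p rule: permutes_induct)
    case id then show ?case by (rule idQ)
  next
    case (swap a b p) then show ?case using Qc trQ by blast
  qed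
qed

lemma cyc_eq_tr_2: "n = 2 \<Longrightarrow> cyc A h n = tr"
proof
  fix y assume n: "n = 2"
  show "cyc A h n y = tr y"
  proof (cases "y \<in> A")
    case True
    then obtain i where i: "i < n" "y = h i" using A_h by blast
    then have "i = 0 \<or> i = 1" using n by auto
    then show ?thesis using i n cyc_h h_inj by auto
  next
    case False
    have "h 0 \<in> A" "h 1 \<in> A" using hA n2 by auto
    then show ?thesis using False by (auto simp: cyc_out transpose_def)
  qed
qed

lemma cyc_neq_tr_3: "3 \<le> n \<Longrightarrow> cyc A h n \<noteq> tr"
proof
  assume n: "3 \<le> n" and e: "cyc A h n = tr"
  have 1: "cyc A h n (h 2) = h (3 mod n)" using n cyc_h[of 2] by (simp add: numeral_3_eq_3)
  have "h 2 \<noteq> h 0" "h 2 \<noteq> h 1" using n h_inj[of 2 0] h_inj[of 2 1] by auto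
  then have 2: "tr (h 2) = h 2" by (simp add: transpose_def)
  have "3 mod n < n" using n by simp
  then have "3 mod n = 2" using 1 2 e h_inj[of "3 mod n" 2] n by auto
  moreover have "3 mod n \<noteq> 2"
  proof (cases "n = 3")
    case True then show ?thesis by simp
  next
    case False then have "3 < n" using n by simp
    then show ?thesis by simp
  qed
  ultimately show False by simp
qed

end



definition eCD :: "'a set \<Rightarrow> 'a set \<Rightarrow> 'a \<Rightarrow> 'a \<Rightarrow> 'a \<Rightarrow> 'a" where
  "eCD X A c d = restrict (\<lambda>x. if x = c then d else if x \<in> A then x else d) X"

lemma eCD_Pr:
  assumes AX: "A \<subseteq> X" and cd: "c \<in> A" "d \<in> A" "c \<noteq> d"
  shows "eCD X A c d \<in> Pr X A" and "eCD X A c d \<notin> Jset X A"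
proof -
  have An: "A \<noteq> {}" using cd by auto
  have v: "eCD X A c d x \<in> A" if "x \<in> X" for x using that cd unfolding eCD_def by auto
  have 1: "eCD X A c d \<in> X \<rightarrow>\<^sub>E X"
  proof (rule PiE_I)
    fix x assume "x \<in> X" then show "eCD X A c d x \<in> X" using v AX by blast
  qed (simp add: eCD_def)
  have 2: "eCD X A c d ` X \<subseteq> A" using v by blast
  have dd: "eCD X A c d d = d" using cd AX unfolding eCD_def by auto
  have 3: "eCD X A c d ` X \<subseteq> eCD X A c d ` A"
  proof
    fix y assume "y \<in> eCD X A c d ` X"
    then obtain x where x: "x \<in> X" "y = eCD X A c d x" by blast
    show "y \<in> eCD X A c d ` A"
    proof (cases "x \<in> A")
      case True then show ?thesis using x by blast
    next
      case False
      then have "y = d" using x cd unfolding eCD_def by auto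
      then show ?thesis using dd cd by (metis image_eqI)
    qed
  qed
  show "eCD X A c d \<in> Pr X A" using Pr_iff[OF AX An] 1 2 3 by simp
  have "c \<notin> eCD X A c d ` A"
  proof
    assume "c \<in> eCD X A c d ` A"
    then obtain x where "x \<in> A" "c = eCD X A c d x" by blast
    then show False using cd AX unfolding eCD_def by (auto split: if_splits)
  qed
  then show "eCD X A c d \<notin> Jset X A" using cd unfolding Jset_def by auto
qed

lemma exists_perm2:
  assumes "a1 \<in> A" "a0 \<in> A" "c \<in> A" "d \<in> A" "a1 \<noteq> a0" "c \<noteq> d"
  shows "\<exists>p. p permutes A \<and> p a1 = c \<and> p a0 = d"
proof -
  define s where "s = Transposition.transpose a1 c"
  define p where "p = Transposition.transpose (s a0) d \<circ> s"
  have sA: "s a0 \<in> A" using assms unfolding s_def by (auto simp: transpose_def)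
  have "s permutes A" using assms unfolding s_def by (simp add: permutes_swap_id)
  moreover have "Transposition.transpose (s a0) d permutes A" using sA assms by (simp add: permutes_swap_id)
  ultimately have "p permutes A" unfolding p_def by (simp add: permutes_compose)
  moreover have "s a1 = c" unfolding s_def by simp
  moreover have "s a0 \<noteq> c" using assms unfolding s_def by (auto simp: transpose_def)
  ultimately show ?thesis using assms unfolding p_def by (auto simp: transpose_def)
qed

lemma upper:
  assumes AX: "A \<subseteq> X" and finX: "finite X"
    and en: "enum A h (card A)"
    and a01: "a0 \<in> A" "a1 \<in> A" "a0 \<noteq> a1"
    and GP: "G \<subseteq> Pr X A"
    and eG: "eCD X A a1 a0 \<in> G"
    and allw: "\<And>w. w \<in> WW X A \<Longrightarrow> \<exists>p. p permutes A \<and> mkJ X A p w \<in> G"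
    and trG: "\<exists>w\<in>WW X A. mkJ X A (Transposition.transpose (h 0) (h 1)) w \<in> G"
    and cG: "\<exists>w\<in>WW X A. mkJ X A (cyc A h (card A)) w \<in> G"
  shows "sg_gen (comp_on X) G = Pr X A"
proof -
  have An: "A \<noteq> {}" using a01 by auto
  have finA: "finite A" using AX finX finite_subset by blast
  let ?S = "sg_gen (comp_on X) G"
  have SP: "?S \<subseteq> Pr X A" using sg_gen_Pr[OF AX An GP] .
  define Q where "Q = {p. p permutes A \<and> (\<exists>v\<in>WW X A. mkJ X A p v \<in> ?S)}"
  have Qc: "f \<circ> g \<in> Q" if fg: "f \<in> Q" "g \<in> Q" for f g
  proof -
    obtain v where v: "f permutes A" "v \<in> WW X A" "mkJ X A f v \<in> ?S" using fg(1) unfolding Q_def by blast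
    obtain u where u: "g permutes A" "u \<in> WW X A" "mkJ X A g u \<in> ?S" using fg(2) unfolding Q_def by blast
    have "comp_on X (mkJ X A f v) (mkJ X A g u) \<in> ?S" using v u by (intro sg_gen.mult)
    then have "mkJ X A (f \<circ> g) u \<in> ?S" using mkJ_comp[OF AX u(1) u(2)] by simp
    then show ?thesis unfolding Q_def using u v by (auto intro: permutes_compose)
  qed
  have trQ: "Transposition.transpose (h 0) (h 1) \<in> Q"
  proof -
    have "h 0 \<in> A" "h 1 \<in> A" using enum.hA[OF en] enum.n2[OF en] by auto
    then show ?thesis using trG unfolding Q_def by (auto simp: permutes_swap_id intro: sg_gen.base)
  qed
  have cQ: "cyc A h (card A) \<in> Q"
    using cG enum.cyc_permutes[OF en] unfolding Q_def by (auto intro: sg_gen.base)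
  have allQ: "p \<in> Q" if "p permutes A" for p
    using enum.perm_gen[OF en Qc trQ cQ that] by blast
  have Jall: "mkJ X A p w \<in> ?S" if p: "p permutes A" and w: "w \<in> WW X A" for p w
  proof -
    obtain r where r: "r permutes A" "mkJ X A r w \<in> G" using allw[OF w] by blast
    have "p \<circ> inv r permutes A" using p r(1) by (simp add: permutes_compose permutes_inv)
    then obtain v where v: "v \<in> WW X A" "mkJ X A (p \<circ> inv r) v \<in> ?S" using allQ unfolding Q_def by blast
    have "comp_on X (mkJ X A (p \<circ> inv r) v) (mkJ X A r w) \<in> ?S" using v r by (auto intro: sg_gen.intros)
    moreover have "comp_on X (mkJ X A (p \<circ> inv r) v) (mkJ X A r w) = mkJ X A p w"
    proof -
      have "p \<circ> inv r \<circ> r = p" using permutes_inv_o(2)[OF r(1)] by (simp add: comp_assoc)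
      then show ?thesis using mkJ_comp[OF AX r(1) w] by simp
    qed
    ultimately show ?thesis by simp
  qed
  have JS: "f \<in> ?S" if "f \<in> Jset X A" for f
    using J_repr[OF AX An finA that] Jall by blast
  have eS: "eCD X A c d \<in> ?S" if cd: "c \<in> A" "d \<in> A" "c \<noteq> d" for c d
  proof -
    obtain p where p: "p permutes A" "p a1 = c" "p a0 = d"
      using exists_perm2[OF a01(2) a01(1) cd(1) cd(2) a01(3)[symmetric] cd(3)] by blast
    have ip: "inv p permutes A" using p(1) by (rule permutes_inv)
    define v where "v = restrict (\<lambda>_. d) (X - A)"
    have v: "v \<in> WW X A" unfolding v_def WW_def using cd by auto
    let ?E = "comp_on X (comp_on X (mkJ X A p v) (eCD X A a1 a0)) (mkJ X A (inv p) v)"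
    have "?E \<in> ?S" using Jall[OF p(1) v] Jall[OF ip v] eG by (auto intro: sg_gen.intros)
    moreover have "?E = eCD X A c d"
    proof
      fix x
      have pinv: "p (inv p y) = y" "inv p (p y) = y" for y using p(1) by (simp_all add: permutes_inverses)
      have ipA: "inv p y \<in> A" if "y \<in> A" for y using ip that by (simp add: permutes_in_image)
      show "?E x = eCD X A c d x"
      proof (cases "x \<in> X")
        case xX: True
        show ?thesis
        proof (cases "x \<in> A")
          case xA: True
          have m1: "mkJ X A (inv p) v x = inv p x" using xA AX by (simp add: mkJ_A)
          have ixX: "inv p x \<in> X" using ipA[OF xA] AX by blast
          show ?thesis
          proof (cases "x = c")
            case True
            have "inv p x = a1" using True p(2) pinv by metis
            then show ?thesis using True xX m1 ixX a01 AX cd p(3)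
              by (simp add: eCD_def mkJ_A subset_iff)
          next
            case False
            have "inv p x \<noteq> a1" using False p(2) pinv by metis
            then have "eCD X A a1 a0 (inv p x) = inv p x" using ixX ipA[OF xA] unfolding eCD_def by simp
            then show ?thesis using False xX xA m1 ixX ipA[OF xA] AX pinv
              by (simp add: eCD_def mkJ_A)
          qed
        next
          case xA: False
          have "v x = d" using xX xA by (simp add: v_def)
          moreover have "inv p d = a0" using p(3) pinv by metis
          ultimately have m1: "mkJ X A (inv p) v x = a0" using xX xA by (simp add: mkJ_XA)
          have "a0 \<in> X" using a01 AX by blast
          then show ?thesis using xX xA m1 a01 AX p(3) by (simp add: eCD_def mkJ_A)
        qed
      next
        case False then show ?thesis by (simp add: eCD_def)
      qed
    qed
    ultimately show ?thesis by simp
  qed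
  have main: "\<forall>f. f \<in> Pr X A \<longrightarrow> card A - card (f ` A) = k \<longrightarrow> f \<in> ?S" for k
  proof (induct k rule: less_induct)
    case (less k)
    show ?case
    proof (intro allI impI)
      fix f assume fP: "f \<in> Pr X A" and k: "card A - card (f ` A) = k"
      note fv = Pr_vals[OF AX An fP]
      have fAA: "f ` A \<subseteq> A" using fv(2) AX by blast
      show "f \<in> ?S"
      proof (cases "f ` A = A")
        case True then show ?thesis using JS fP unfolding Jset_def by blast
      next
        case False
        then have lt: "card (f ` A) < card A" using fAA finA by (meson psubsetI psubset_card_mono)
        obtain c0 where c0: "c0 \<in> A" "c0 \<notin> f ` A" using False fAA by blast
        have "\<not> inj_on f A" using lt by (metis card_image less_irrefl)
        then obtain a b where ab: "a \<in> A" "b \<in> A" "a \<noteq> b" "f a = f b" unfolding inj_on_def by blast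
        define f' where "f' = restrict (\<lambda>x. if x = b then c0 else f x) X"
        have bX: "b \<in> X" "a \<in> X" using ab AX by auto
        have f'v: "f' x \<in> A" if "x \<in> X" for x using that fv(2) c0 unfolding f'_def by auto
        have f'1: "f' \<in> X \<rightarrow>\<^sub>E X"
        proof (rule PiE_I)
          fix x assume "x \<in> X" then show "f' x \<in> X" using f'v AX by blast
        qed (simp add: f'_def)
        have f'img: "f' ` A = insert c0 (f ` A)"
        proof
          show "f' ` A \<subseteq> insert c0 (f ` A)" using AX unfolding f'_def by auto
          show "insert c0 (f ` A) \<subseteq> f' ` A"
          proof
            fix y assume "y \<in> insert c0 (f ` A)"
            then show "y \<in> f' ` A"
            proof
              assume "y = c0" then have "f' b = y" using bX unfolding f'_def by simp
              then show ?thesis using ab by blast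
            next
              assume "y \<in> f ` A"
              then obtain z where z: "z \<in> A" "y = f z" by blast
              show ?thesis
              proof (cases "z = b")
                case True
                then have "f' a = y" using z ab bX unfolding f'_def by simp
                then show ?thesis using ab by blast
              next
                case False
                then have "f' z = y" using z AX unfolding f'_def by auto
                then show ?thesis using z by blast
              qed
            qed
          qed
        qed
        have f'3: "f' ` X \<subseteq> f' ` A"
        proof
          fix y assume "y \<in> f' ` X"
          then obtain x where x: "x \<in> X" "y = f' x" by blast
          show "y \<in> f' ` A"
          proof (cases "x = b")
            case True then show ?thesis using x ab by blast
          next
            case False
            then have "y = f x" using x unfolding f'_def by simp
            then have "y \<in> f ` A" using fv(3) x by blast
            then show ?thesis using f'img by blast
          qed
        qed
        have f'P: "f' \<in> Pr X A" using Pr_iff[OF AX An] f'1 f'v f'3 by auto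
        have "card (f' ` A) = Suc (card (f ` A))" using f'img c0 finA by simp
        then have "card A - card (f' ` A) < k" using k lt by simp
        then have f'S: "f' \<in> ?S" using less f'P by blast
        have fa: "f a \<in> A" "f a \<noteq> c0" using fAA ab c0 by auto
        have eS': "eCD X A c0 (f a) \<in> ?S" using eS[OF c0(1) fa(1) fa(2)[symmetric]] .
        have "comp_on X (eCD X A c0 (f a)) f' = f"
        proof
          fix x show "comp_on X (eCD X A c0 (f a)) f' x = f x"
          proof (cases "x \<in> X")
            case True
            have fx: "f' x \<in> X" using f'v[OF True] AX by blast
            show ?thesis
            proof (cases "x = b")
              case True
              then show ?thesis using fx bX ab c0 unfolding f'_def eCD_def by simp
            next
              case False
              have "f x \<in> f ` A" using fv(3) \<open>x \<in> X\<close> by blast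
              then have "f x \<noteq> c0" "f x \<in> A" using c0 fAA by auto
              then show ?thesis using fx False \<open>x \<in> X\<close> unfolding f'_def eCD_def by simp
            qed
          next
            case False then show ?thesis using fv(1) by (simp add: PiE_def extensional_def)
          qed
        qed
        then show "f \<in> ?S" using eS' f'S by (metis sg_gen.mult)
      qed
    qed
  qed
  show ?thesis using SP main by blast
qed



lemma gen_self:
  assumes AX: "A \<subseteq> X" "A \<noteq> {}"
  shows "generates (comp_on X) (Pr X A) (Pr X A)"
  unfolding generates_def
proof
  show "sg_gen (comp_on X) (Pr X A) = Pr X A"
  proof
    show "sg_gen (comp_on X) (Pr X A) \<subseteq> Pr X A" using sg_gen_Pr[OF AX] by blast
    show "Pr X A \<subseteq> sg_gen (comp_on X) (Pr X A)" by (auto intro: sg_gen.base)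
  qed
qed simp

lemma lessThan_lepoll: "finite G \<Longrightarrow> N \<le> card G \<Longrightarrow> {..<N} \<lesssim> G"
  using lepoll_iff_card_le[of "{..<N}" G] by simp

lemma gen_props:
  assumes "generates (comp_on X) (Pr X A) G"
  shows "G \<subseteq> Pr X A" "sg_gen (comp_on X) G = Pr X A"
  using assms unfolding generates_def by auto

lemma case1:
  assumes AX: "A \<subseteq> X" and c1: "card A = 1"
  shows "has_rank (comp_on X) (Pr X A) {..<(1::nat)}"
proof -
  obtain a where A: "A = {a}" using c1 card_1_singletonE by blast
  have An: "A \<noteq> {}" using A by simp
  have aX: "a \<in> X" using A AX by simp
  have PP: "Pr X A = {restrict (\<lambda>_. a) X}"
  proof
    show "{restrict (\<lambda>_. a) X} \<subseteq> Pr X A" using const_Pr[OF AX] A by simp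
    show "Pr X A \<subseteq> {restrict (\<lambda>_. a) X}"
    proof
      fix f assume "f \<in> Pr X A"
      note fv = Pr_vals[OF AX An this]
      have "f = restrict (\<lambda>_. a) X"
      proof
        fix x show "f x = restrict (\<lambda>_. a) X x"
          using fv(1,2) A by (cases "x \<in> X") (auto simp: PiE_def extensional_def)
      qed
      then show "f \<in> {restrict (\<lambda>_. a) X}" by simp
    qed
  qed
  have "Pr X A \<approx> {..<(1::nat)}" using PP by (simp add: eqpoll_iff_finite_card)
  moreover have "{..<(1::nat)} \<lesssim> G" if "generates (comp_on X) (Pr X A) G" for G
  proof -
    note g = gen_props[OF that]
    have "G \<noteq> {}"
    proof
      assume "G = {}"
      have "sg_gen (comp_on X) {} \<subseteq> {}" by (rule sg_gen_sub) auto
      then show False using g PP \<open>G = {}\<close> by auto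
    qed
    moreover have "finite G" using g(1) PP finite_subset by auto
    ultimately show ?thesis using lessThan_lepoll[of G 1] by (simp add: Suc_le_eq card_gt_0_iff)
  qed
  ultimately show ?thesis unfolding has_rank_def using gen_self[OF AX An] by blast
qed

lemma two_elems:
  assumes "A \<noteq> {}" "card A \<noteq> 1"
  obtains a b where "a \<in> A" "b \<in> A" "a \<noteq> b"
proof -
  obtain a where a: "a \<in> A" using assms by blast
  have "A \<noteq> {a}" using assms by auto
  then obtain b where "b \<in> A" "b \<noteq> a" using a by blast
  then show ?thesis using that a by blast
qed

lemma WW_single:
  assumes "X - A = {}" and "w \<in> WW X A" and "v \<in> WW X A"
  shows "w = v"
proof
  fix x have "x \<notin> X - A" using assms(1) by blast
  moreover have "w \<in> (X - A) \<rightarrow>\<^sub>E A" "v \<in> (X - A) \<rightarrow>\<^sub>E A" using assms(2,3) unfolding WW_def by auto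
  ultimately have "w x = undefined" "v x = undefined" using PiE_arb by metis+
  then show "w x = v x" by simp
qed

lemma finite_setup:
  assumes AX: "A \<subseteq> X" and finX: "finite X" and c2: "2 \<le> card A"
  obtains h where "enum A h (card A)"
proof -
  have "finite A" using AX finX finite_subset by blast
  then obtain h where "bij_betw h {0..<card A} A" using ex_bij_betw_nat_finite by blast
  then have "bij_betw h {..<card A} A" by (simp add: atLeast0LessThan)
  then have "enum A h (card A)" using c2 by unfold_locales
  then show ?thesis using that by blast
qed

lemma lower_final:
  assumes AX: "A \<subseteq> X" and finX: "finite X" and c2: "2 \<le> card A"
    and G: "generates (comp_on X) (Pr X A) G"
  shows "card (WW X A) + 1 \<le> card G" "3 \<le> card A \<Longrightarrow> 3 \<le> card G"
proof -
  note g = gen_props[OF G]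
  have An: "A \<noteq> {}" using c2 by auto
  have "card A \<noteq> 1" using c2 by simp
  then obtain a b where ab: "a \<in> A" "b \<in> A" "a \<noteq> b" by (rule two_elems[OF An])
  have finG: "finite G" using g(1) Pr_finite[OF AX An finX] finite_subset by blast
  have cG: "card G = card (G \<inter> Jset X A) + card (G - Jset X A)" using finG by (rule card_Int_Diff)
  have "G - Jset X A \<noteq> {}" using not_all_J[OF AX ab g] .
  then have d1: "1 \<le> card (G - Jset X A)" using finG by (simp add: Suc_le_eq card_gt_0_iff)
  show "card (WW X A) + 1 \<le> card G" using lower_count[OF AX An finX g] d1 cG by linarith
  show "3 \<le> card G" if c3: "3 \<le> card A"
  proof -
    have "2 \<le> card (G \<inter> Jset X A)" using two_perm_gens[OF AX finX c3 g(1) g(2)] .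
    then show ?thesis using d1 cG by linarith
  qed
qed

lemma case3:
  assumes AX: "A \<subseteq> X" and finX: "finite X" and c3: "3 \<le> card A" and cX: "card A = card X"
  shows "has_rank (comp_on X) (Pr X A) {..<(3::nat)}"
proof -
  have c2: "2 \<le> card A" using c3 by simp
  have An: "A \<noteq> {}" using c2 by auto
  have AeX: "A = X" using AX finX cX by (simp add: card_subset_eq)
  obtain h where en: "enum A h (card A)" using finite_setup[OF AX finX c2] by blast
  let ?n = "card A"
  have h01: "h 0 \<in> A" "h 1 \<in> A" "h 1 \<noteq> h 0"
    using enum.hA[OF en] enum.h_inj[OF en, of 1 0] c2 by auto
  define w0 where "w0 = restrict (\<lambda>_. h 0) (X - A)"
  have w0: "w0 \<in> WW X A" unfolding w0_def WW_def using h01 by auto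
  define e where "e = eCD X A (h 1) (h 0)"
  define t where "t = mkJ X A (Transposition.transpose (h 0) (h 1)) w0"
  define c where "c = mkJ X A (cyc A h ?n) w0"
  have pt: "Transposition.transpose (h 0) (h 1) permutes A" using h01 by (simp add: permutes_swap_id)
  have pc: "cyc A h ?n permutes A" by (rule enum.cyc_permutes[OF en])
  have tJ: "t \<in> Jset X A" unfolding t_def by (rule mkJ_J[OF AX An pt w0])
  have cJ: "c \<in> Jset X A" unfolding c_def by (rule mkJ_J[OF AX An pc w0])
  have eP: "e \<in> Pr X A" "e \<notin> Jset X A" unfolding e_def using eCD_Pr[OF AX h01(2) h01(1) h01(3)] by auto
  have tc: "t \<noteq> c"
  proof
    assume "t = c"
    then have "Transposition.transpose (h 0) (h 1) = cyc A h ?n"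
      unfolding t_def c_def using mkJ_inj[OF AX pt pc w0 w0] by blast
    then show False using enum.cyc_neq_tr_3[OF en c3] by simp
  qed
  define G3 where "G3 = {t, c, e}"
  have "t \<noteq> e" "c \<noteq> e" using tJ cJ eP by auto
  then have card3: "card G3 = 3" unfolding G3_def using tc by simp
  have GP: "G3 \<subseteq> Pr X A" unfolding G3_def using tJ cJ eP unfolding Jset_def by auto
  have "sg_gen (comp_on X) G3 = Pr X A"
  proof (rule upper[OF AX finX en h01(1) h01(2) h01(3)[symmetric] GP])
    show "eCD X A (h 1) (h 0) \<in> G3" unfolding G3_def e_def by simp
    fix w assume "w \<in> WW X A"
    then have "w = w0" using WW_single[of X A w w0] AeX w0 by simp
    then show "\<exists>p. p permutes A \<and> mkJ X A p w \<in> G3" using pt unfolding G3_def t_def by blast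
  next
    show "\<exists>w\<in>WW X A. mkJ X A (Transposition.transpose (h 0) (h 1)) w \<in> G3"
      using w0 unfolding G3_def t_def by blast
    show "\<exists>w\<in>WW X A. mkJ X A (cyc A h (card A)) w \<in> G3"
      using w0 unfolding G3_def c_def by blast
  qed
  then have gen: "generates (comp_on X) (Pr X A) G3" unfolding generates_def using GP by simp
  have eq: "G3 \<approx> {..<(3::nat)}" unfolding eqpoll_iff_finite_card using card3 by (simp add: G3_def)
  have "{..<(3::nat)} \<lesssim> G" if "generates (comp_on X) (Pr X A) G" for G
  proof -
    note g = gen_props[OF that]
    have "finite G" using g(1) Pr_finite[OF AX An finX] finite_subset by blast
    then show ?thesis using lower_final(2)[OF AX finX c2 that c3] by (rule lessThan_lepoll)
  qed
  then show ?thesis unfolding has_rank_def using gen eq by blast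
qed



lemma case4:
  assumes AX: "A \<subseteq> X" and finX: "finite X" and c2: "2 \<le> card A"
    and nc: "\<not> (3 \<le> card A \<and> card A = card X)"
  shows "has_rank (comp_on X) (Pr X A) {..<(1 + card A ^ card (X - A))}"
proof -
  have An: "A \<noteq> {}" using c2 by auto
  have finA: "finite A" using AX finX finite_subset by blast
  obtain h where en: "enum A h (card A)" using finite_setup[OF AX finX c2] by blast
  have h01: "h 0 \<in> A" "h 1 \<in> A" "h 1 \<noteq> h 0"
    using enum.hA[OF en] enum.h_inj[OF en, of 1 0] c2 by auto
  define e where "e = eCD X A (h 1) (h 0)"
  have eP: "e \<in> Pr X A" "e \<notin> Jset X A" unfolding e_def using eCD_Pr[OF AX h01(2) h01(1) h01(3)] by auto
  have pt: "Transposition.transpose (h 0) (h 1) permutes A" using h01 by (simp add: permutes_swap_id)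
  have pc: "cyc A h (card A) permutes A" by (rule enum.cyc_permutes[OF en])
  define w1 where "w1 = restrict (\<lambda>_. h 0) (X - A)"
  have w1: "w1 \<in> WW X A" unfolding w1_def WW_def using h01 by auto
  let ?N = "1 + card A ^ card (X - A)"
  have cW: "card (WW X A) = card A ^ card (X - A)" using card_WW[OF finX] .
  obtain Gs where GP: "Gs \<subseteq> Pr X A" and Gs: "sg_gen (comp_on X) Gs = Pr X A" and cGs: "finite Gs" "card Gs = ?N"
  proof (cases "A = X")
    case True
    then have "card A = 2" using nc c2 by simp
    then have ct: "cyc A h (card A) = Transposition.transpose (h 0) (h 1)"
      using enum.cyc_eq_tr_2[OF en] by simp
    define t where "t = mkJ X A (Transposition.transpose (h 0) (h 1)) w1"
    have tJ: "t \<in> Jset X A" unfolding t_def by (rule mkJ_J[OF AX An pt w1])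
    define G2 where "G2 = {t, e}"
    have "t \<noteq> e" using tJ eP by auto
    then have c22: "card G2 = 2" unfolding G2_def by simp
    have "X - A = {}" using True by simp
    then have "card (X - A) = 0" by (metis card.empty)
    then have N2: "?N = 2" by simp
    have cG2: "card G2 = ?N" using c22 N2 by linarith
    have GP2: "G2 \<subseteq> Pr X A" unfolding G2_def using tJ eP unfolding Jset_def by auto
    have XA: "X - A = {}" using True by simp
    have "sg_gen (comp_on X) G2 = Pr X A"
    proof (rule upper[OF AX finX en h01(1) h01(2) h01(3)[symmetric] GP2])
      show "eCD X A (h 1) (h 0) \<in> G2" unfolding G2_def e_def by simp
      fix w assume "w \<in> WW X A"
      then have "w = w1" using WW_single[OF XA _ w1] by simp
      then show "\<exists>p. p permutes A \<and> mkJ X A p w \<in> G2" using pt unfolding G2_def t_def by blast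
    next
      show "\<exists>w\<in>WW X A. mkJ X A (Transposition.transpose (h 0) (h 1)) w \<in> G2"
        using w1 unfolding G2_def t_def by blast
      show "\<exists>w\<in>WW X A. mkJ X A (cyc A h (card A)) w \<in> G2"
        using w1 ct unfolding G2_def t_def by auto
    qed
    moreover have "finite G2" unfolding G2_def by simp
    ultimately show ?thesis by (rule that[OF GP2 _ _ cG2])
  next
    case False
    then obtain x0 where x0: "x0 \<in> X" "x0 \<notin> A" using AX by blast
    define w2 where "w2 = restrict (\<lambda>_. h 1) (X - A)"
    have w2: "w2 \<in> WW X A" unfolding w2_def WW_def using h01 by auto
    have w12: "w1 \<noteq> w2"
    proof
      assume "w1 = w2"
      then have "w1 x0 = w2 x0" by simp
      then show False using x0 h01 unfolding w1_def w2_def by simp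
    qed
    define sg where "sg = (\<lambda>w. if w = w1 then Transposition.transpose (h 0) (h 1)
                               else if w = w2 then cyc A h (card A) else id)"
    have psg: "sg w permutes A" for w unfolding sg_def using pt pc by auto
    define img where "img = (\<lambda>w. mkJ X A (sg w) w) ` WW X A"
    define G4 where "G4 = insert e img"
    have imgJ: "img \<subseteq> Jset X A" unfolding img_def using mkJ_J[OF AX An psg] by auto
    have inj: "inj_on (\<lambda>w. mkJ X A (sg w) w) (WW X A)"
    proof
      fix w v assume "w \<in> WW X A" "v \<in> WW X A" "mkJ X A (sg w) w = mkJ X A (sg v) v"
      then show "w = v" using mkJ_inj[OF AX psg psg] by blast
    qed
    have finW: "finite (WW X A)" using finite_WW[OF finX AX] .
    have "card img = card (WW X A)" unfolding img_def using inj by (rule card_image)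
    moreover have "e \<notin> img" using imgJ eP by blast
    moreover have "finite img" unfolding img_def using finW by simp
    ultimately have cG4: "card G4 = ?N" "finite G4" unfolding G4_def using cW by simp_all
    have GP4: "G4 \<subseteq> Pr X A" unfolding G4_def using imgJ eP unfolding Jset_def by auto
    have "sg_gen (comp_on X) G4 = Pr X A"
    proof (rule upper[OF AX finX en h01(1) h01(2) h01(3)[symmetric] GP4])
      show "eCD X A (h 1) (h 0) \<in> G4" unfolding G4_def e_def by simp
      fix w assume "w \<in> WW X A"
      then have "mkJ X A (sg w) w \<in> G4" unfolding G4_def img_def by simp
      then show "\<exists>p. p permutes A \<and> mkJ X A p w \<in> G4" using psg by blast
    next
      have "sg w1 = Transposition.transpose (h 0) (h 1)" unfolding sg_def by simp
      moreover have "mkJ X A (sg w1) w1 \<in> img" unfolding img_def using w1 by (rule imageI)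
      ultimately have "mkJ X A (Transposition.transpose (h 0) (h 1)) w1 \<in> G4" unfolding G4_def by simp
      then show "\<exists>w\<in>WW X A. mkJ X A (Transposition.transpose (h 0) (h 1)) w \<in> G4"
        using w1 by blast
      have "sg w2 = cyc A h (card A)" unfolding sg_def using w12 by simp
      moreover have "mkJ X A (sg w2) w2 \<in> img" unfolding img_def using w2 by (rule imageI)
      ultimately have "mkJ X A (cyc A h (card A)) w2 \<in> G4" unfolding G4_def by simp
      then show "\<exists>w\<in>WW X A. mkJ X A (cyc A h (card A)) w \<in> G4"
        using w2 by blast
    qed
    then show ?thesis by (rule that[OF GP4 _ cG4(2) cG4(1)])
  qed
  have gen: "generates (comp_on X) (Pr X A) Gs" unfolding generates_def using GP Gs by simp
  have eq: "Gs \<approx> {..<?N}" unfolding eqpoll_iff_finite_card using cGs by simp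
  have "{..<?N} \<lesssim> G" if G: "generates (comp_on X) (Pr X A) G" for G
  proof -
    note g = gen_props[OF G]
    have "finite G" using g(1) Pr_finite[OF AX An finX] finite_subset by blast
    moreover have "?N \<le> card G" using lower_final(1)[OF AX finX c2 G] cW by simp
    ultimately show ?thesis by (rule lessThan_lepoll)
  qed
  then show ?thesis unfolding has_rank_def using gen eq by blast
qed

theorem theorem5p24:
  fixes X A :: "'a set"
  assumes "X \<noteq> {}" and "A \<noteq> {}" and "A \<subseteq> X"
  defines "P \<equiv> Reg (TXA X A) (comp_on X)"
  shows "(card A = 1 \<longrightarrow> has_rank (comp_on X) P {..<(1::nat)})
       \<and> (card A \<noteq> 1 \<and> infinite X \<longrightarrow> has_rank (comp_on X) P (Pow X))
       \<and> (finite X \<and> 3 \<le> card A \<and> card A = card X \<longrightarrow> has_rank (comp_on X) P {..<(3::nat)})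
       \<and> (finite X \<and> 2 \<le> card A \<and> \<not> (3 \<le> card A \<and> card A = card X) \<longrightarrow>
            has_rank (comp_on X) P {..<(1 + card A ^ card (X - A))})"
proof -
  have P: "P = Pr X A" unfolding P_def Pr_def ..
  have 1: "card A = 1 \<longrightarrow> has_rank (comp_on X) P {..<(1::nat)}"
    unfolding P using case1[OF assms(3)] by blast
  have 2: "card A \<noteq> 1 \<and> infinite X \<longrightarrow> has_rank (comp_on X) P (Pow X)"
  proof
    assume h: "card A \<noteq> 1 \<and> infinite X"
    then have c1: "card A \<noteq> 1" and iX: "infinite X" by auto
    obtain a b where ab: "a \<in> A" "b \<in> A" "a \<noteq> b" by (rule two_elems[OF assms(2) c1])
    show "has_rank (comp_on X) P (Pow X)" unfolding P by (rule infinite_case[OF assms(3) ab iX])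
  qed
  have 3: "finite X \<and> 3 \<le> card A \<and> card A = card X \<longrightarrow> has_rank (comp_on X) P {..<(3::nat)}"
    unfolding P using case3[OF assms(3)] by blast
  have 4: "finite X \<and> 2 \<le> card A \<and> \<not> (3 \<le> card A \<and> card A = card X) \<longrightarrow>
            has_rank (comp_on X) P {..<(1 + card A ^ card (X - A))}"
    unfolding P using case4[OF assms(3)] by blast
  show ?thesis using 1 2 3 4 by (intro conjI)
qed


end
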